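(* Let $X\subset\mathbb{R}^2$ be a twice continuously differentiable simple closed planar curve, regarded as the mm-space $\mathcal{X}$, and let $\mathbb{S}^1$ be the unit circle regarded likewise. If $H_{\mathcal{X}}(r)=H_{\mathbb{S}^1}(r)$ for all $r\geq0$, then $X$ is isometric to $\mathbb{S}^1$, i.e. $X$ is a circle of radius $1$.
   Context: A plane curve $X$ is regarded as an mm-space $\mathcal{X}=(X,d_X,\mu_X)$ with $d_X$ the restriction of the Euclidean distance of $\mathbb{R}^2$ and $\mu_X$ arclength measure normalized to total mass one. The global distance distribution is $H_{\mathcal{X}}(r)=\mu_X\otimes\mu_X(\{(x,x')\in X\times X: d_X(x,x')\le r\})$, $r\geq0$. *)

theory Defs
  imports "HOL-Probability.Probability"
begin

definition C2_function :: "(real \<Rightarrow> complex) \<Rightarrow> bool" where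
  "C2_function \<gamma> \<longleftrightarrow>
     (\<exists>\<gamma>' \<gamma>''. (\<forall>t. (\<gamma> has_vector_derivative \<gamma>' t) (at t)) \<and>
               (\<forall>t. (\<gamma>' has_vector_derivative \<gamma>'' t) (at t)) \<and>
               continuous_on UNIV \<gamma>'')"

definition C2_simple_closed_curve :: "(real \<Rightarrow> complex) \<Rightarrow> real \<Rightarrow> bool" where
  "C2_simple_closed_curve \<gamma> L \<longleftrightarrow>
     L > 0 \<and> C2_function \<gamma> \<and>
     (\<forall>t. \<gamma> (t + L) = \<gamma> t) \<and>
     inj_on \<gamma> {0..<L} \<and>
     (\<forall>t. vector_derivative \<gamma> (at t) \<noteq> 0)"

definition curve_length :: "(real \<Rightarrow> complex) \<Rightarrow> real \<Rightarrow> real" where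
  "curve_length \<gamma> L = (LINT t:{0..L}|lborel. norm (vector_derivative \<gamma> (at t)))"

text \<open>Arclength measure on the curve, normalized to total mass one
  (push-forward along gamma of |gamma'(t)| dt / length on one period).\<close>
definition curve_measure :: "(real \<Rightarrow> complex) \<Rightarrow> real \<Rightarrow> complex measure" where
  "curve_measure \<gamma> L =
     distr (density lborel (\<lambda>t. ennreal (norm (vector_derivative \<gamma> (at t)) / curve_length \<gamma> L)
                                  * indicator {0..<L} t))
           borel \<gamma>"

definition dist_distribution :: "(real \<Rightarrow> complex) \<Rightarrow> real \<Rightarrow> real \<Rightarrow> real" where
  "dist_distribution \<gamma> L r =
     measure (curve_measure \<gamma> L \<Otimes>\<^sub>M curve_measure \<gamma> L) {(x, x'). dist x x' \<le> r}"

end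

theory Submission
  imports Defs
begin

locale ccurve =
  fixes \<gamma> \<gamma>' :: "real \<Rightarrow> complex" and L :: real
  assumes L: "L > 0"
    and der: "\<And>t. (\<gamma> has_vector_derivative \<gamma>' t) (at t)"
    and cont': "continuous_on UNIV \<gamma>'"
    and nz: "\<And>t. \<gamma>' t \<noteq> 0"
begin

lemma cont: "continuous_on UNIV \<gamma>"
  using der by (meson continuous_at_imp_continuous_on has_vector_derivative_continuous)

lemma vd: "vector_derivative \<gamma> (at t) = \<gamma>' t"
  using der by (rule vector_derivative_at)

definition g where "g t = norm (\<gamma>' t)"
definition len where "len = curve_length \<gamma> L"

lemma g_cont: "continuous_on UNIV g"
  unfolding g_def by (intro continuous_intros cont')

lemma len_eq: "len = (LINT t:{0..L}|lborel. g t)"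
  unfolding len_def curve_length_def vd g_def ..

lemma len_pos: "len > 0"
proof -
  have "compact (g ` {0..L})" using g_cont
    by (meson compact_Icc compact_continuous_image continuous_on_subset subset_UNIV)
  moreover have "g ` {0..L} \<noteq> {}" using L by auto
  ultimately obtain c where c: "c \<in> g ` {0..L}" "\<forall>y \<in> g ` {0..L}. c \<le> y"
    using compact_attains_inf by blast
  have cpos: "c > 0" using c(1) nz by (auto simp: g_def)
  have "(LINT t:{0..L}|lborel. c) \<le> (LINT t:{0..L}|lborel. g t)"
    apply (rule set_integral_mono)
    using borel_integrable_atLeastAtMost'[of 0 L "\<lambda>_. c"] apply simp
    using borel_integrable_atLeastAtMost'[of 0 L g] g_cont continuous_on_subset apply blast
    using c(2) by auto
  moreover have "(LINT t:{0..L}|lborel. c) = L * c"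
    using L by (subst set_integral_const) auto
  ultimately show ?thesis using cpos L len_eq by (smt (verit) mult_pos_pos)
qed


definition dens where "dens t = g t / len * indicator {0..<L} t"

lemma dens_nonneg: "dens t \<ge> 0"
  using len_pos by (auto simp: dens_def g_def split: split_indicator)

lemma dens_pos: "t \<in> {0..<L} \<Longrightarrow> dens t > 0"
  using len_pos nz by (auto simp: dens_def g_def)

lemma meas_g[measurable]: "g \<in> borel_measurable borel"
  by (rule borel_measurable_continuous_onI[OF g_cont])

lemma meas_gamma[measurable]: "\<gamma> \<in> borel_measurable borel"
  by (rule borel_measurable_continuous_onI[OF cont])

lemma meas_dens[measurable]: "dens \<in> borel_measurable borel"
  unfolding dens_def by measurable

lemma cm_eq: "curve_measure \<gamma> L = distr (density lborel (\<lambda>t. ennreal (dens t))) borel \<gamma>"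
  unfolding curve_measure_def
  by (intro arg_cong2[where f="\<lambda>a b. distr a borel b"] refl arg_cong2[where f=density] ext)
     (auto simp: dens_def vd g_def len_def split: split_indicator)

lemma dens_integrable: "integrable lborel dens"
proof -
  have "set_integrable lborel {0..L} g"
    using borel_integrable_atLeastAtMost'[of 0 L g] g_cont continuous_on_subset by blast
  then have "integrable lborel (\<lambda>t. indicator {0..L} t * g t / len)"
    unfolding set_integrable_def by simp
  then show ?thesis
    apply (rule Bochner_Integration.integrable_bound)
    using len_pos by (auto simp: dens_def g_def split: split_indicator)
qed

lemma dens_int: "integral\<^sup>L lborel dens = 1"
proof -
  have "integral\<^sup>L lborel dens = integral\<^sup>L lborel (\<lambda>t. indicator {0..L} t * g t / len)"
  proof (rule integral_cong_AE)
    show "AE t in lborel. dens t = indicator {0..L} t * g t / len"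
      using AE_lborel_singleton[of L] by eventually_elim (auto simp: dens_def split: split_indicator)
  qed measurable
  also have "\<dots> = (LINT t:{0..L}|lborel. g t) / len"
    unfolding set_lebesgue_integral_def by simp
  also have "\<dots> = 1" using len_pos len_eq by simp
  finally show ?thesis .
qed

lemma cm_prob: "prob_space (curve_measure \<gamma> L)"
proof (rule prob_spaceI)
  have "emeasure (curve_measure \<gamma> L) (space (curve_measure \<gamma> L))
      = (\<integral>\<^sup>+ t. ennreal (dens t) \<partial>lborel)"
    unfolding cm_eq by (simp add: emeasure_distr emeasure_density)
  also have "\<dots> = ennreal (integral\<^sup>L lborel dens)"
    by (rule nn_integral_eq_integral[OF dens_integrable]) (simp add: dens_nonneg)
  finally show "emeasure (curve_measure \<gamma> L) (space (curve_measure \<gamma> L)) = 1"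
    by (simp add: dens_int)
qed

lemma cm_sets: "sets (curve_measure \<gamma> L) = sets borel"
  unfolding cm_eq by simp

lemma cm_integral: "(f::complex\<Rightarrow>real) \<in> borel_measurable borel \<Longrightarrow>
  integral\<^sup>L (curve_measure \<gamma> L) f = integral\<^sup>L lborel (\<lambda>t. dens t *\<^sub>R f (\<gamma> t))"
proof -
  assume f[measurable]: "f \<in> borel_measurable borel"
  have "integral\<^sup>L (curve_measure \<gamma> L) f = integral\<^sup>L (density lborel (\<lambda>t. ennreal (dens t))) (\<lambda>t. f (\<gamma> t))"
    unfolding cm_eq by (rule integral_distr) simp_all
  also have "\<dots> = integral\<^sup>L lborel (\<lambda>t. dens t *\<^sub>R f (\<gamma> t))"
    by (rule integral_density) (auto simp: dens_nonneg)
  finally show ?thesis .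
qed

lemma cm_AE: "(AE x in curve_measure \<gamma> L. P x) \<longleftrightarrow> (AE t in lborel. 0 < dens t \<longrightarrow> P (\<gamma> t))"
  if "{x. P x} \<in> sets borel"
  unfolding cm_eq using that
  by (subst AE_distr_iff) (auto simp: AE_density)

lemma cm_AE_K: "AE x in curve_measure \<gamma> L. x \<in> \<gamma> ` {0..L}"
proof -
  have "closed (\<gamma> ` {0..L})"
    by (meson compact_Icc compact_continuous_image compact_imp_closed cont continuous_on_subset subset_UNIV)
  then have "{x. x \<in> \<gamma> ` {0..L}} \<in> sets borel" by simp
  then show ?thesis
    by (subst cm_AE) (auto simp: dens_def split: split_indicator)
qed

end

locale cmm = prob_space M for M :: "complex measure" +
  fixes K :: "complex set"
  assumes sets_M: "sets M = sets borel" and K: "compact K" and AEK: "AE x in M. x \<in> K"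
begin

lemma meas_cont: "continuous_on UNIV (f::complex\<Rightarrow>real) \<Longrightarrow> f \<in> borel_measurable M"
  using borel_measurable_continuous_onI measurable_cong_sets sets_M by blast

lemma int_cont: "continuous_on UNIV (f::complex\<Rightarrow>real) \<Longrightarrow> integrable M f"
proof -
  assume f: "continuous_on UNIV f"
  have "compact (f ` K)" using f K by (meson compact_continuous_image continuous_on_subset subset_UNIV)
  then obtain B where B: "\<forall>y\<in>f`K. norm y \<le> B" using compact_imp_bounded bounded_iff by metis
  show ?thesis
    apply (rule integrable_const_bound[where B=B])
    using AEK B apply (auto elim!: eventually_mono)[1]
    using meas_cont[OF f] .
qed

sublocale P: pair_prob_space M M by unfold_locales

abbreviation "N \<equiv> M \<Otimes>\<^sub>M M"

lemma sets_N: "sets N = sets (borel :: (complex \<times> complex) measure)"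
  by (metis borel_prod sets_M sets_pair_measure_cong)

lemma AEK2: "AE z in N. z \<in> K \<times> K"
proof -
  have cK: "closed K" using K compact_imp_closed by blast
  have spM: "space M = UNIV" using sets_eq_imp_space_eq[OF sets_M] by simp
  have "{x\<in>space N. fst x \<in> K \<and> snd x \<in> K} = K \<times> K"
    by (auto simp: space_pair_measure spM)
  moreover have "K \<times> K \<in> sets N"
    unfolding sets_N using cK closed_Times by (intro borel_closed) auto
  ultimately have "{x\<in>space N. fst x \<in> K \<and> snd x \<in> K} \<in> sets N" by simp
  then have "(AE x in M. AE y in M. x \<in> K \<and> y \<in> K) \<longleftrightarrow> (AE z in N. fst z \<in> K \<and> snd z \<in> K)"
    by (rule P.AE_pair_iff)
  moreover have "AE x in M. AE y in M. x \<in> K \<and> y \<in> K"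
    using AEK by (auto elim!: eventually_mono)
  ultimately show ?thesis by (simp add: mem_Times_iff)
qed

lemma int_cont2: "continuous_on UNIV (F::complex\<times>complex\<Rightarrow>real) \<Longrightarrow> integrable N F"
proof -
  assume f: "continuous_on UNIV F"
  have "compact (K\<times>K)" using K by (intro compact_Times)
  then have "compact (F ` (K\<times>K))" using f
    by (meson compact_continuous_image continuous_on_subset subset_UNIV)
  then obtain B where B: "\<forall>y\<in>F`(K\<times>K). norm y \<le> B" using compact_imp_bounded bounded_iff by metis
  show ?thesis
    apply (rule P.integrable_const_bound[where B=B])
    using AEK2 B apply (auto elim!: eventually_mono)[1]
    using borel_measurable_continuous_onI[OF f] measurable_cong_sets sets_N by blast
qed

lemma prodint:
  assumes f: "continuous_on UNIV (f::complex\<Rightarrow>real)" and g: "continuous_on UNIV (g::complex\<Rightarrow>real)"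
  shows "integrable N (\<lambda>z. f (fst z) * g (snd z))"
    and "integral\<^sup>L N (\<lambda>z. f (fst z) * g (snd z)) = integral\<^sup>L M f * integral\<^sup>L M g"
proof -
  show i: "integrable N (\<lambda>z. f (fst z) * g (snd z))"
    by (rule int_cont2) (intro continuous_intros continuous_on_compose2[OF f] continuous_on_compose2[OF g]; auto)
  have "integral\<^sup>L N (\<lambda>z. f (fst z) * g (snd z)) = (\<integral>x. (\<integral>y. f x * g y \<partial>M) \<partial>M)"
    using P.integral_fst'[OF i] by simp
  also have "\<dots> = (\<integral>x. f x * integral\<^sup>L M g \<partial>M)" by simp
  also have "\<dots> = integral\<^sup>L M f * integral\<^sup>L M g" by simp
  finally show "integral\<^sup>L N (\<lambda>z. f (fst z) * g (snd z)) = integral\<^sup>L M f * integral\<^sup>L M g" .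
qed

lemma listint:
  assumes "\<forall>(c,f,g)\<in>set ts. continuous_on UNIV (f::complex\<Rightarrow>real) \<and> continuous_on UNIV (g::complex\<Rightarrow>real)"
  shows "integrable N (\<lambda>z. sum_list (map (\<lambda>(c,f,g). c * (f (fst z) * g (snd z))) ts))
    \<and> integral\<^sup>L N (\<lambda>z. sum_list (map (\<lambda>(c,f,g). c * (f (fst z) * g (snd z))) ts))
      = sum_list (map (\<lambda>(c,f,g). c * (integral\<^sup>L M f * integral\<^sup>L M g)) ts)"
  using assms
proof (induction ts)
  case Nil
  then show ?case by simp
next
  case (Cons t ts)
  obtain c f g where t: "t = (c,f,g)" by (cases t) auto
  have fg: "continuous_on UNIV f" "continuous_on UNIV g" using Cons.prems t by auto
  from Cons.IH Cons.prems have IH: "integrable N (\<lambda>z. sum_list (map (\<lambda>(c,f,g). c * (f (fst z) * g (snd z))) ts))"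
    "integral\<^sup>L N (\<lambda>z. sum_list (map (\<lambda>(c,f,g). c * (f (fst z) * g (snd z))) ts))
      = sum_list (map (\<lambda>(c,f,g). c * (integral\<^sup>L M f * integral\<^sup>L M g)) ts)" by auto
  have i1: "integrable N (\<lambda>z. c * (f (fst z) * g (snd z)))" using prodint(1)[OF fg] by simp
  show ?case
    unfolding t using IH i1 prodint(2)[OF fg]
    by (simp add: Bochner_Integration.integral_add)
qed

end

context cmm begin

definition "mr = integral\<^sup>L M Re"
definition "mi = integral\<^sup>L M Im"
definition "ca x = Re x - mr"
definition "cb x = Im x - mi"
definition "cr x = ca x ^ 2 + cb x ^ 2"

lemma ca_cont[continuous_intros]: "continuous_on UNIV ca"
  unfolding ca_def by (intro continuous_intros)
lemma cb_cont[continuous_intros]: "continuous_on UNIV cb"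
  unfolding cb_def by (intro continuous_intros)
lemma cr_cont[continuous_intros]: "continuous_on UNIV cr"
  unfolding cr_def by (intro continuous_intros)

lemma int_ca: "integral\<^sup>L M ca = 0"
proof -
  have "integral\<^sup>L M ca = integral\<^sup>L M Re - integral\<^sup>L M (\<lambda>_. mr)"
    unfolding ca_def by (rule Bochner_Integration.integral_diff) (auto intro!: int_cont continuous_intros)
  then show ?thesis by (simp add: mr_def prob_space)
qed

lemma int_cb: "integral\<^sup>L M cb = 0"
proof -
  have "integral\<^sup>L M cb = integral\<^sup>L M Im - integral\<^sup>L M (\<lambda>_. mi)"
    unfolding cb_def by (rule Bochner_Integration.integral_diff) (auto intro!: int_cont continuous_intros)
  then show ?thesis by (simp add: mi_def prob_space)
qed

lemma dist_sq: "(dist x y)^2 = cr x + cr y - 2 * (ca x * ca y) - 2 * (cb x * cb y)"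
proof -
  have "(dist x y)^2 = (Re x - Re y)^2 + (Im x - Im y)^2"
    by (simp add: dist_norm cmod_power2)
  also have "Re x - Re y = ca x - ca y" by (simp add: ca_def)
  also have "Im x - Im y = cb x - cb y" by (simp add: cb_def)
  finally show ?thesis by (simp add: cr_def power2_eq_square algebra_simps)
qed

definition "VV = integral\<^sup>L M cr"
definition "AA = integral\<^sup>L M (\<lambda>x. ca x ^ 2)"
definition "BB = integral\<^sup>L M (\<lambda>x. cb x ^ 2)"
definition "CC = integral\<^sup>L M (\<lambda>x. ca x * cb x)"
definition "R2 = integral\<^sup>L M (\<lambda>x. cr x ^ 2)"

lemma VV_eq: "VV = AA + BB"
  unfolding VV_def AA_def BB_def cr_def
  by (rule Bochner_Integration.integral_add) (auto intro!: int_cont continuous_intros)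

lemma d2: "integral\<^sup>L N (\<lambda>z. (dist (fst z) (snd z))^2) = 2 * VV"
proof -
  let ?ts = "[(1::real, cr, \<lambda>_. 1::real), (1, \<lambda>_. 1, cr), (-2, ca, ca), (-2, cb, cb)]"
  have c: "\<forall>(c,f,g)\<in>set ?ts. continuous_on UNIV f \<and> continuous_on UNIV g"
    by (auto intro!: continuous_intros)
  have "(\<lambda>z. (dist (fst z) (snd z))^2) = (\<lambda>z. sum_list (map (\<lambda>(c,f,g). c * (f (fst z) * g (snd z))) ?ts))"
    by (auto simp: dist_sq)
  then show ?thesis using listint[OF c] by (simp add: int_ca int_cb VV_def prob_space)
qed

lemma dist_4: "(dist x y)^4 = cr x ^ 2 + cr y ^ 2 + 2 * (cr x * cr y)
   - 4 * ((cr x * ca x) * ca y) - 4 * ((cr x * cb x) * cb y)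
   - 4 * (ca x * (cr y * ca y)) - 4 * (cb x * (cr y * cb y))
   + 4 * (ca x ^ 2 * ca y ^ 2) + 8 * ((ca x * cb x) * (ca y * cb y)) + 4 * (cb x ^ 2 * cb y ^ 2)"
proof -
  have "(dist x y)^4 = ((dist x y)^2)^2" by simp
  also have "\<dots> = (cr x + cr y - 2 * (ca x * ca y) - 2 * (cb x * cb y))^2" by (simp add: dist_sq)
  finally show ?thesis by (simp add: power2_eq_square algebra_simps)
qed

lemma d4: "integral\<^sup>L N (\<lambda>z. (dist (fst z) (snd z))^4) = 2 * R2 + 2 * VV^2 + 4 * AA^2 + 8 * CC^2 + 4 * BB^2"
proof -
  let ?ts = "[(1::real, \<lambda>x. cr x ^ 2, \<lambda>_. 1::real), (1, \<lambda>_. 1, \<lambda>x. cr x ^ 2), (2, cr, cr),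
     (-4, \<lambda>x. cr x * ca x, ca), (-4, \<lambda>x. cr x * cb x, cb), (-4, ca, \<lambda>x. cr x * ca x), (-4, cb, \<lambda>x. cr x * cb x),
     (4, \<lambda>x. ca x ^ 2, \<lambda>x. ca x ^ 2), (8, \<lambda>x. ca x * cb x, \<lambda>x. ca x * cb x), (4, \<lambda>x. cb x ^ 2, \<lambda>x. cb x ^ 2)]"
  have c: "\<forall>(c,f,g)\<in>set ?ts. continuous_on UNIV f \<and> continuous_on UNIV g"
    by (auto intro!: continuous_intros)
  have "(\<lambda>z. (dist (fst z) (snd z))^4) = (\<lambda>z. sum_list (map (\<lambda>(c,f,g). c * (f (fst z) * g (snd z))) ?ts))"
    by (auto simp: dist_4)
  then show ?thesis using listint[OF c] by (simp add: int_ca int_cb VV_def AA_def BB_def CC_def R2_def power2_eq_square prob_space)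
qed

lemma key:
  assumes "integral\<^sup>L N (\<lambda>z. (dist (fst z) (snd z))^2) = 2"
    and "integral\<^sup>L N (\<lambda>z. (dist (fst z) (snd z))^4) = 6"
  shows "AE x in M. cr x = 1"
proof -
  have V: "VV = 1" using assms(1) d2 by simp
  have e: "2 * R2 + 2 + 4 * AA^2 + 8 * CC^2 + 4 * BB^2 = 6" using assms(2) d4 V by simp
  have AB: "AA + BB = 1" using V VV_eq by simp
  have BB: "BB = 1 - AA" using AB by simp
  have "AA^2 + BB^2 = 1/2 + 2 * (AA - 1/2)^2" unfolding BB by (simp add: power2_eq_square algebra_simps)
  then have "AA^2 + BB^2 \<ge> 1/2" by (smt (verit) zero_le_power2)
  moreover have "CC^2 \<ge> 0" by simp
  ultimately have R: "R2 \<le> 1" using e by linarith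
  have "integral\<^sup>L M (\<lambda>x. (cr x - 1)^2) = integral\<^sup>L M (\<lambda>x. cr x ^ 2 - 2 * cr x + 1)"
    by (simp add: power2_eq_square algebra_simps)
  also have "\<dots> = R2 - 2 * VV + 1"
    unfolding R2_def VV_def
    by (subst Bochner_Integration.integral_add Bochner_Integration.integral_diff, (auto intro!: int_cont continuous_intros)[2])+ (simp add: prob_space)
  finally have "integral\<^sup>L M (\<lambda>x. (cr x - 1)^2) \<le> 0" using R V by simp
  moreover have "integral\<^sup>L M (\<lambda>x. (cr x - 1)^2) \<ge> 0" by simp
  ultimately have "integral\<^sup>L M (\<lambda>x. (cr x - 1)^2) = 0" by simp
  then have "AE x in M. (cr x - 1)^2 = 0"
    by (subst (asm) integral_nonneg_eq_0_iff_AE) (auto intro!: int_cont continuous_intros)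
  then show ?thesis by (auto elim!: eventually_mono)
qed

end

lemma distr_dist_eq:
  fixes M1 M2 :: "complex measure"
  assumes p1: "prob_space M1" and s1: "sets M1 = sets borel"
    and p2: "prob_space M2" and s2: "sets M2 = sets borel"
    and H: "\<forall>r\<ge>0. measure (M1 \<Otimes>\<^sub>M M1) {(x, x'). dist x x' \<le> r} = measure (M2 \<Otimes>\<^sub>M M2) {(x, x'). dist x x' \<le> r}"
  shows "distr (M1 \<Otimes>\<^sub>M M1) borel (\<lambda>z. dist (fst z) (snd z)) = distr (M2 \<Otimes>\<^sub>M M2) borel (\<lambda>z. dist (fst z) (snd z))"
proof -
  have gen: "real_distribution (distr (M \<Otimes>\<^sub>M M) borel (\<lambda>z. dist (fst z) (snd z)))
     \<and> (\<forall>r. cdf (distr (M \<Otimes>\<^sub>M M) borel (\<lambda>z. dist (fst z) (snd z))) r = measure (M \<Otimes>\<^sub>M M) {(x, x'). dist x x' \<le> r})"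
    if p: "prob_space M" and s: "sets M = sets borel" for M :: "complex measure"
  proof -
    interpret P: pair_prob_space M M using p by (intro pair_prob_space.intro pair_sigma_finite.intro prob_space_imp_sigma_finite) auto
    have sN: "sets (M \<Otimes>\<^sub>M M) = sets (borel :: (complex \<times> complex) measure)"
      by (metis borel_prod s sets_pair_measure_cong)
    have spN: "space (M \<Otimes>\<^sub>M M) = UNIV" using sets_eq_imp_space_eq[OF sN] by simp
    have m: "(\<lambda>z. dist (fst z) (snd z)) \<in> measurable (M \<Otimes>\<^sub>M M) borel"
      proof -
        have "(\<lambda>z::complex\<times>complex. dist (fst z) (snd z)) \<in> borel_measurable borel"
          by (intro borel_measurable_continuous_onI continuous_intros)
        then show ?thesis using measurable_cong_sets[OF sN refl] by blast
      qed
    have rd: "real_distribution (distr (M \<Otimes>\<^sub>M M) borel (\<lambda>z. dist (fst z) (snd z)))"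
      unfolding real_distribution_def using P.prob_space_distr[OF m] by (simp add: real_distribution_axioms_def)
    have "cdf (distr (M \<Otimes>\<^sub>M M) borel (\<lambda>z. dist (fst z) (snd z))) r = measure (M \<Otimes>\<^sub>M M) {(x, x'). dist x x' \<le> r}" for r
    proof -
      have "(\<lambda>z. dist (fst z) (snd z)) -` {..r} \<inter> space (M \<Otimes>\<^sub>M M) = {(x, x'). dist x x' \<le> r}"
        by (auto simp: spN)
      then show ?thesis unfolding cdf_def by (subst measure_distr[OF m]) auto
    qed
    then show ?thesis using rd by auto
  qed
  show ?thesis
  proof (rule cdf_unique)
    show "real_distribution (distr (M1 \<Otimes>\<^sub>M M1) borel (\<lambda>z. dist (fst z) (snd z)))" using gen[OF p1 s1] by blast
    show "real_distribution (distr (M2 \<Otimes>\<^sub>M M2) borel (\<lambda>z. dist (fst z) (snd z)))" using gen[OF p2 s2] by blast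
    show "cdf (distr (M1 \<Otimes>\<^sub>M M1) borel (\<lambda>z. dist (fst z) (snd z))) = cdf (distr (M2 \<Otimes>\<^sub>M M2) borel (\<lambda>z. dist (fst z) (snd z)))"
    proof
      fix r
      show "cdf (distr (M1 \<Otimes>\<^sub>M M1) borel (\<lambda>z. dist (fst z) (snd z))) r = cdf (distr (M2 \<Otimes>\<^sub>M M2) borel (\<lambda>z. dist (fst z) (snd z))) r"
      proof (cases "r \<ge> 0")
        case True then show ?thesis using gen[OF p1 s1] gen[OF p2 s2] H by auto
      next
        case False
        then have "{(x::complex, x'). dist x x' \<le> r} = {}" by (auto dest: order_trans[OF zero_le_dist])
        then show ?thesis using gen[OF p1 s1] gen[OF p2 s2] by auto
      qed
    qed
  qed
qed

lemma int_dist_eq: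
  fixes M1 M2 :: "complex measure" and f :: "real \<Rightarrow> real"
  assumes p1: "prob_space M1" and s1: "sets M1 = sets borel"
    and p2: "prob_space M2" and s2: "sets M2 = sets borel"
    and H: "\<forall>r\<ge>0. measure (M1 \<Otimes>\<^sub>M M1) {(x, x'). dist x x' \<le> r} = measure (M2 \<Otimes>\<^sub>M M2) {(x, x'). dist x x' \<le> r}"
    and f: "f \<in> borel_measurable borel"
  shows "integral\<^sup>L (M1 \<Otimes>\<^sub>M M1) (\<lambda>z. f (dist (fst z) (snd z))) = integral\<^sup>L (M2 \<Otimes>\<^sub>M M2) (\<lambda>z. f (dist (fst z) (snd z)))"
proof -
  have m: "(\<lambda>z. dist (fst z) (snd z)) \<in> measurable (M \<Otimes>\<^sub>M M) borel"
    if s: "sets M = sets borel" for M :: "complex measure"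
  proof -
    have sN: "sets (M \<Otimes>\<^sub>M M) = sets (borel :: (complex \<times> complex) measure)"
      by (metis borel_prod s sets_pair_measure_cong)
    show ?thesis
      proof -
        have "(\<lambda>z::complex\<times>complex. dist (fst z) (snd z)) \<in> borel_measurable borel"
          by (intro borel_measurable_continuous_onI continuous_intros)
        then show ?thesis using measurable_cong_sets[OF sN refl] by blast
      qed
  qed
  have "integral\<^sup>L (M1 \<Otimes>\<^sub>M M1) (\<lambda>z. f (dist (fst z) (snd z))) = integral\<^sup>L (distr (M1 \<Otimes>\<^sub>M M1) borel (\<lambda>z. dist (fst z) (snd z))) f"
    by (rule integral_distr[symmetric, OF m[OF s1] f])
  also have "\<dots> = integral\<^sup>L (distr (M2 \<Otimes>\<^sub>M M2) borel (\<lambda>z. dist (fst z) (snd z))) f"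
    using distr_dist_eq[OF assms(1-5)] by simp
  also have "\<dots> = integral\<^sup>L (M2 \<Otimes>\<^sub>M M2) (\<lambda>z. f (dist (fst z) (snd z)))"
    by (rule integral_distr[OF m[OF s2] f])
  finally show ?thesis .
qed

context ccurve begin

lemma cm_int_cont:
  assumes h: "continuous_on UNIV (h::complex\<Rightarrow>real)"
  shows "integral\<^sup>L (curve_measure \<gamma> L) h = integral\<^sup>L lborel (\<lambda>t. indicator {0..L} t *\<^sub>R (g t * h (\<gamma> t))) / len"
proof -
  have hm: "h \<in> borel_measurable borel" by (rule borel_measurable_continuous_onI[OF h])
  have "integral\<^sup>L (curve_measure \<gamma> L) h = integral\<^sup>L lborel (\<lambda>t. dens t *\<^sub>R h (\<gamma> t))"
    by (rule cm_integral[OF hm])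
  also have "\<dots> = integral\<^sup>L lborel (\<lambda>t. indicator {0..L} t *\<^sub>R (g t * h (\<gamma> t)) / len)"
  proof (rule integral_cong_AE)
    show "AE t in lborel. dens t *\<^sub>R h (\<gamma> t) = indicator {0..L} t *\<^sub>R (g t * h (\<gamma> t)) / len"
      using AE_lborel_singleton[of L] by eventually_elim (auto simp: dens_def split: split_indicator)
  qed (use hm in measurable)
  also have "\<dots> = integral\<^sup>L lborel (\<lambda>t. indicator {0..L} t *\<^sub>R (g t * h (\<gamma> t))) / len"
    by simp
  finally show ?thesis .
qed

end

lemma cis_der: "(cis has_vector_derivative (\<i> * cis t)) (at t)"
  using has_derivative_cis[OF has_derivative_ident[of "at t"]]
  by (simp add: has_vector_derivative_def)

interpretation circ: ccurve cis "\<lambda>t. \<i> * cis t" "2*pi"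
proof
  show "0 < 2 * pi" by simp
  show "(cis has_vector_derivative \<i> * cis t) (at t)" for t by (rule cis_der)
  show "continuous_on UNIV (\<lambda>t. \<i> * cis t)" by (intro continuous_intros)
  show "\<i> * cis t \<noteq> 0" for t by simp
qed

lemma circ_g: "circ.g t = 1" by (simp add: circ.g_def norm_mult)

lemma circ_len: "circ.len = 2 * pi"
  unfolding circ.len_eq circ_g by (subst set_integral_const) auto

lemma circ_int:
  assumes "continuous_on UNIV (h::complex\<Rightarrow>real)"
  shows "integral\<^sup>L (curve_measure cis (2*pi)) h = integral\<^sup>L lborel (\<lambda>t. indicator {0..2*pi} t *\<^sub>R h (cis t)) / (2*pi)"
  using circ.cm_int_cont[OF assms] by (simp add: circ_g circ_len)

lemma ftc: 
  assumes "\<And>x. (F has_real_derivative f x) (at x)" "continuous_on UNIV f"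
  shows "integral\<^sup>L lborel (\<lambda>x. indicator {0..2*pi} x *\<^sub>R f x) = F (2*pi) - F 0"
proof (rule integral_FTC_atLeastAtMost)
  show "0 \<le> 2 * pi" by simp
  show "(F has_vector_derivative f x) (at x within {0..2 * pi})" for x
    using assms(1)[of x] by (simp add: has_real_derivative_iff_has_vector_derivative[symmetric] has_field_derivative_at_within)
  show "continuous_on {0..2 * pi} f" using assms(2) continuous_on_subset by blast
qed

interpretation cmS: cmm "curve_measure cis (2*pi)" "cis ` {0..2*pi}"
  by (intro cmm.intro cmm_axioms.intro circ.cm_prob)
     (auto simp: circ.cm_sets circ.cm_AE_K intro!: compact_continuous_image continuous_intros)

lemma S_mr: "cmS.mr = 0"
proof -
  have "cmS.mr = integral\<^sup>L lborel (\<lambda>t. indicator {0..2*pi} t *\<^sub>R cos t) / (2*pi)"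
    unfolding cmS.mr_def by (subst circ_int) (auto intro!: continuous_intros)
  also have "integral\<^sup>L lborel (\<lambda>t. indicator {0..2*pi} t *\<^sub>R cos t) = sin (2*pi) - sin 0"
    by (rule ftc) (auto intro!: derivative_eq_intros continuous_intros)
  finally show ?thesis by simp
qed

lemma S_mi: "cmS.mi = 0"
proof -
  have "cmS.mi = integral\<^sup>L lborel (\<lambda>t. indicator {0..2*pi} t *\<^sub>R sin t) / (2*pi)"
    unfolding cmS.mi_def by (subst circ_int) (auto intro!: continuous_intros)
  also have "integral\<^sup>L lborel (\<lambda>t. indicator {0..2*pi} t *\<^sub>R sin t) = (- cos (2*pi)) - (- cos 0)"
    by (rule ftc) (auto intro!: derivative_eq_intros continuous_intros)
  finally show ?thesis by simp
qed

lemma S_AA: "cmS.AA = 1/2"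
proof -
  have "cmS.AA = integral\<^sup>L lborel (\<lambda>t. indicator {0..2*pi} t *\<^sub>R (cos t)^2) / (2*pi)"
    unfolding cmS.AA_def cmS.ca_def S_mr by (subst circ_int) (auto intro!: continuous_intros)
  also have "integral\<^sup>L lborel (\<lambda>t. indicator {0..2*pi} t *\<^sub>R (cos t)^2)
      = (2*pi/2 + sin (2*pi) * cos (2*pi) / 2) - (0/2 + sin 0 * cos 0 / 2)"
  proof (rule ftc[where F="\<lambda>t. t/2 + sin t * cos t / 2"])
    show "((\<lambda>t. t/2 + sin t * cos t / 2) has_real_derivative (cos x)^2) (at x)" for x
    proof -
      have "((\<lambda>t. t/2 + sin t * cos t / 2) has_real_derivative (1/2 + (cos x * cos x - sin x * sin x)/2)) (at x)"
        by (auto intro!: derivative_eq_intros simp: field_simps)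
      moreover have "1/2 + (cos x * cos x - sin x * sin x)/2 = (cos x)^2"
      proof -
        have "sin x * sin x = 1 - cos x * cos x" using sin_cos_squared_add[of x] unfolding power2_eq_square by linarith
        then show ?thesis unfolding power2_eq_square by (simp add: field_simps)
      qed
      ultimately show ?thesis by simp
    qed
  qed (auto intro!: continuous_intros)
  finally show ?thesis by simp
qed

lemma S_CC: "cmS.CC = 0"
proof -
  have "cmS.CC = integral\<^sup>L lborel (\<lambda>t. indicator {0..2*pi} t *\<^sub>R (cos t * sin t)) / (2*pi)"
    unfolding cmS.CC_def cmS.ca_def cmS.cb_def S_mr S_mi by (subst circ_int) (auto intro!: continuous_intros)
  also have "integral\<^sup>L lborel (\<lambda>t. indicator {0..2*pi} t *\<^sub>R (cos t * sin t))
      = (sin (2*pi))^2/2 - (sin 0)^2/2"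
  proof (rule ftc[where F="\<lambda>t. (sin t)^2/2"])
    show "((\<lambda>t. (sin t)^2/2) has_real_derivative (cos x * sin x)) (at x)" for x
      by (auto intro!: derivative_eq_intros simp: algebra_simps)
  qed (auto intro!: continuous_intros)
  finally show ?thesis by simp
qed

lemma S_cr: "cmS.cr (cis t) = 1"
  unfolding cmS.cr_def cmS.ca_def cmS.cb_def S_mr S_mi by (simp add: sin_cos_squared_add)

lemma S_one: "integral\<^sup>L (curve_measure cis (2*pi)) (\<lambda>x. f (cmS.cr x)) = f 1"
  if "continuous_on UNIV f" for f :: "real \<Rightarrow> real"
proof -
  have "integral\<^sup>L (curve_measure cis (2*pi)) (\<lambda>x. f (cmS.cr x)) = integral\<^sup>L lborel (\<lambda>t. circ.dens t *\<^sub>R f (cmS.cr (cis t)))"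
    by (rule circ.cm_integral) (intro borel_measurable_continuous_onI continuous_on_compose2[OF that] continuous_intros; auto)
  also have "\<dots> = integral\<^sup>L lborel (\<lambda>t. circ.dens t * f 1)" by (simp add: S_cr)
  also have "\<dots> = f 1" using circ.dens_int by simp
  finally show ?thesis .
qed

lemma S_VV: "cmS.VV = 1"
  unfolding cmS.VV_def using S_one[of "\<lambda>x. x"] by simp

lemma S_R2: "cmS.R2 = 1"
  unfolding cmS.R2_def using S_one[of "\<lambda>x. x^2"] by (simp add: continuous_intros)

lemma S_d2: "integral\<^sup>L cmS.N (\<lambda>z. (dist (fst z) (snd z))^2) = 2"
  using cmS.d2 S_VV by simp

lemma S_d4: "integral\<^sup>L cmS.N (\<lambda>z. (dist (fst z) (snd z))^4) = 6"
proof -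
  have B: "cmS.BB = 1/2" using cmS.VV_eq S_VV S_AA by simp
  show ?thesis using cmS.d4 by (simp add: B S_VV S_AA S_CC S_R2 power2_eq_square)
qed

lemma no_loop:
  fixes h :: "real \<Rightarrow> real"
  assumes c: "continuous_on {0..L} h" and L: "L > 0" and per: "h 0 = h L" and inj: "inj_on h {0..<L}"
  shows False
proof -
  let ?u = "h 0" and ?v = "h (L/2)"
  have uv: "?u \<noteq> ?v" using inj L by (auto dest: inj_onD[of h _ 0 "L/2"])
  let ?y = "(?u + ?v)/2"
  have c1: "continuous_on {0..L/2} h" using c L by (auto intro: continuous_on_subset)
  have c2: "continuous_on {L/2..L} h" using c L by (auto intro: continuous_on_subset)
  obtain s1 where s1: "0 \<le> s1" "s1 \<le> L/2" "h s1 = ?y"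
  proof (cases "?u < ?v")
    case True then show ?thesis using IVT'[of h 0 ?y "L/2", OF _ _ _ c1] L that by auto
  next
    case False then show ?thesis using IVT2'[of h "L/2" ?y 0, OF _ _ _ c1] L that by auto
  qed
  obtain s2 where s2: "L/2 \<le> s2" "s2 \<le> L" "h s2 = ?y"
  proof (cases "?u < ?v")
    case True then show ?thesis using IVT2'[of h L ?y "L/2", OF _ _ _ c2] L per that by auto
  next
    case False then show ?thesis using IVT'[of h "L/2" ?y L, OF _ _ _ c2] L per that by auto
  qed
  have "s1 \<noteq> L/2" "s2 \<noteq> L/2" "s2 \<noteq> L" using s1 s2 uv per by auto
  then have "s1 < L/2" "L/2 < s2" "s2 < L" using s1 s2 by auto
  then have "s1 = s2" using inj s1 s2 by (auto dest: inj_onD[of h _ s1 s2])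
  then show False using \<open>s1 < L/2\<close> \<open>L/2 < s2\<close> by simp
qed

lemma stereo_inv:
  fixes w :: complex
  assumes "norm w = 1" "1 + Re w > 0"
  shows "w = Complex ((1 - (Im w / (1 + Re w))^2) / (1 + (Im w / (1 + Re w))^2))
                     (2 * (Im w / (1 + Re w)) / (1 + (Im w / (1 + Re w))^2))"
proof -
  obtain a b where w: "w = Complex a b" by (cases w)
  have ab: "a^2 + b^2 = 1" using assms(1) w by (simp add: cmod_def)
  have a: "1 + a > 0" using assms(2) w by simp
  have den: "(1 + a)^2 + b^2 = 2 * (1 + a)" using ab by (simp add: power2_eq_square algebra_simps)
  have n1: "1 - (b / (1 + a))^2 = ((1+a)^2 - b^2) / (1+a)^2"
    using a by (simp add: power_divide diff_divide_distrib)
  have d1: "1 + (b / (1 + a))^2 = ((1+a)^2 + b^2) / (1+a)^2"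
    using a by (simp add: power_divide add_divide_distrib)
  have e1: "(1 - (b / (1 + a))^2) / (1 + (b / (1 + a))^2) = ((1+a)^2 - b^2) / ((1+a)^2 + b^2)"
    unfolding n1 d1 using a by simp
  have pos: "(1+a)^2 + b^2 > 0" using a by (simp add: add_pos_nonneg)
  have e2: "2 * (b / (1 + a)) / (1 + (b / (1 + a))^2) = 2 * b * (1+a) / ((1+a)^2 + b^2)"
  proof -
    have gen: "2 * (b / c) / (D / c^2) = 2 * b * c / D" if "c \<noteq> 0" "D \<noteq> 0" for c D :: real
      using that by (simp add: field_simps power2_eq_square)
    show ?thesis unfolding d1 using gen[of "1+a" "(1+a)^2 + b^2"] a pos by simp
  qed
  have "((1+a)^2 - b^2) = 2 * a * (1 + a)" using ab by (simp add: power2_eq_square algebra_simps)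
  moreover have nz: "2 + 2 * a \<noteq> 0" using a by simp
  ultimately have "((1+a)^2 - b^2) / ((1+a)^2 + b^2) = a" using den by (simp add: field_simps)
  moreover have "2 * b * (1+a) / ((1+a)^2 + b^2) = b" using den nz by (simp add: field_simps)
  ultimately show ?thesis using w e1 e2 by simp
qed

lemma stereo_inj:
  fixes w w' :: complex
  assumes "norm w = 1" "1 + Re w > 0" "norm w' = 1" "1 + Re w' > 0"
    and "Im w / (1 + Re w) = Im w' / (1 + Re w')"
  shows "w = w'"
  using stereo_inv[OF assms(1,2)] stereo_inv[OF assms(3,4)] assms(5) by metis

theorem proposition5p6:
  fixes \<gamma> :: "real \<Rightarrow> complex" and L :: real
  assumes "C2_simple_closed_curve \<gamma> L"
    and "\<forall>r\<ge>0. dist_distribution \<gamma> L r = dist_distribution cis (2 * pi) r"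
  shows "\<exists>c. \<gamma> ` {0..L} = sphere c 1"
proof -
  from assms(1) obtain \<gamma>' \<gamma>'' where L: "L > 0" and d1: "\<forall>t. (\<gamma> has_vector_derivative \<gamma>' t) (at t)"
    and d2: "\<forall>t. (\<gamma>' has_vector_derivative \<gamma>'' t) (at t)" and per: "\<forall>t. \<gamma> (t + L) = \<gamma> t"
    and inj: "inj_on \<gamma> {0..<L}" and nzv: "\<forall>t. vector_derivative \<gamma> (at t) \<noteq> 0"
    unfolding C2_simple_closed_curve_def C2_function_def by blast
  have c': "continuous_on UNIV \<gamma>'"
    using d2 by (meson continuous_at_imp_continuous_on has_vector_derivative_continuous)
  have nz: "\<gamma>' t \<noteq> 0" for t using nzv vector_derivative_at[OF d1[rule_format]] by metis
  interpret X: ccurve \<gamma> \<gamma>' L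
    by unfold_locales (use L d1 c' nz in auto)
  interpret cmX: cmm "curve_measure \<gamma> L" "\<gamma> ` {0..L}"
    by (intro cmm.intro cmm_axioms.intro X.cm_prob)
      (auto simp: X.cm_sets X.cm_AE_K intro!: compact_continuous_image continuous_on_subset[OF X.cont])
  have H: "\<forall>r\<ge>0. measure cmX.N {(x,x'). dist x x' \<le> r} = measure cmS.N {(x,x'). dist x x' \<le> r}"
    using assms(2) unfolding dist_distribution_def .
  have e2: "integral\<^sup>L cmX.N (\<lambda>z. (dist (fst z) (snd z))^2) = 2"
    using int_dist_eq[OF X.cm_prob X.cm_sets circ.cm_prob circ.cm_sets H, of "\<lambda>u. u^2"] S_d2 by simp
  have e4: "integral\<^sup>L cmX.N (\<lambda>z. (dist (fst z) (snd z))^4) = 6"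
    using int_dist_eq[OF X.cm_prob X.cm_sets circ.cm_prob circ.cm_sets H, of "\<lambda>u. u^4"] S_d4 by simp
  have AE1: "AE x in curve_measure \<gamma> L. cmX.cr x = 1" by (rule cmX.key[OF e2 e4])
  define m where "m = Complex cmX.mr cmX.mi"
  have crd: "cmX.cr x = (dist m x)^2" for x
    unfolding cmX.cr_def cmX.ca_def cmX.cb_def m_def by (simp add: dist_norm cmod_power2 power2_commute)
  have cl: "{x. cmX.cr x = 1} \<in> sets borel"
    by (intro borel_closed closed_Collect_eq cmX.cr_cont continuous_intros)
  have AE2: "AE t in lborel. 0 < X.dens t \<longrightarrow> cmX.cr (\<gamma> t) = 1"
    using AE1 X.cm_AE[OF cl] by simp
  have on: "cmX.cr (\<gamma> t) = 1" if t: "t \<in> {0..<L}" for t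
  proof (rule ccontr)
    assume ne: "cmX.cr (\<gamma> t) \<noteq> 1"
    have "continuous_on UNIV (\<lambda>s. cmX.cr (\<gamma> s))"
      by (intro continuous_on_compose2[OF cmX.cr_cont X.cont]) auto
    then have "continuous (at t) (\<lambda>s. cmX.cr (\<gamma> s))"
      by (simp add: continuous_on_eq_continuous_at)
    from continuous_at_avoid[OF this ne] obtain e where e: "e > 0" "\<forall>s. dist t s < e \<longrightarrow> cmX.cr (\<gamma> s) \<noteq> 1"
      by blast
    define t1 where "t1 = min (t + e/2) L"
    have tt1: "t < t1" using t e by (auto simp: t1_def)
    from AE2 obtain N where N: "{s \<in> space lborel. \<not> (0 < X.dens s \<longrightarrow> cmX.cr (\<gamma> s) = 1)} \<subseteq> N"
      "emeasure lborel N = 0" "N \<in> sets lborel"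
      by (rule AE_E)
    have "{t<..<t1} \<subseteq> N"
    proof
      fix s assume s: "s \<in> {t<..<t1}"
      then have "s \<in> {0..<L}" using t by (auto simp: t1_def)
      then have "0 < X.dens s" by (rule X.dens_pos)
      moreover have "dist t s < e" using s e by (auto simp: t1_def dist_real_def)
      ultimately show "s \<in> N" using N(1) e(2) by auto
    qed
    then have "emeasure lborel {t<..<t1} \<le> emeasure lborel N" using N(3) by (rule emeasure_mono)
    then show False using N(2) tt1 by simp
  qed
  have onL: "cmX.cr (\<gamma> t) = 1" if "t \<in> {0..L}" for t
  proof (cases "t = L")
    case True
    have "\<gamma> L = \<gamma> 0" using per[rule_format, of 0] by simp
    then show ?thesis using on[of 0] L True by simp
  next
    case False then show ?thesis using on that by auto
  qed
  have sub1: "\<gamma> ` {0..L} \<subseteq> sphere m 1"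
  proof
    fix x assume "x \<in> \<gamma> ` {0..L}"
    then have "(dist m x)^2 = 1" using onL crd by auto
    then show "x \<in> sphere m 1" by (simp add: power2_eq_1_iff) (smt (verit) zero_le_dist)
  qed
  have sub2: "sphere m 1 \<subseteq> \<gamma> ` {0..L}"
  proof
    fix p assume p: "p \<in> sphere m 1"
    show "p \<in> \<gamma> ` {0..L}"
    proof (rule ccontr)
      assume np: "p \<notin> \<gamma> ` {0..L}"
      have npm: "norm (p - m) = 1" using p by (simp add: dist_norm norm_minus_commute)
      then have pm: "p - m \<noteq> 0" by auto
      define w where "w t = - (\<gamma> t - m) / (p - m)" for t
      have wn: "norm (w t) = 1" if "t \<in> {0..L}" for t
      proof -
        have "\<gamma> t \<in> \<gamma> ` {0..L}" using that by simp
        with sub1 have "\<gamma> t \<in> sphere m 1" by blast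
        then have "dist m (\<gamma> t) = 1" by simp
        then have "norm (\<gamma> t - m) = 1" by (simp add: dist_norm norm_minus_commute)
        then show ?thesis using norm_minus_commute[of m "\<gamma> t"] by (simp add: w_def norm_divide npm)
      qed
      have wne: "w t \<noteq> -1" if "t \<in> {0..L}" for t
      proof
        assume "w t = -1"
        then have "\<gamma> t - m = p - m" using pm by (simp add: w_def field_simps)
        then have "\<gamma> t = p" by simp
        then show False using np that by auto
      qed
      have wre: "1 + Re (w t) > 0" if "t \<in> {0..L}" for t
      proof -
        have n: "(Re (w t))^2 + (Im (w t))^2 = 1" using wn[OF that] by (simp add: cmod_power2[symmetric])
        have "Re (w t) \<ge> -1" using wn[OF that] abs_Re_le_cmod[of "w t"] by linarith
        moreover have "Re (w t) \<noteq> -1"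
        proof
          assume r: "Re (w t) = -1"
          then have "Im (w t) = 0" using n by simp
          then have "w t = -1" using r by (simp add: complex_eq_iff)
          then show False using wne[OF that] by simp
        qed
        ultimately show ?thesis by linarith
      qed
      define h where "h t = Im (w t) / (1 + Re (w t))" for t
      have wc: "continuous_on {0..L} w"
        unfolding w_def by (intro continuous_intros continuous_on_subset[OF X.cont]) (use pm in auto)
      have hc: "continuous_on {0..L} h"
        unfolding h_def using wre
        by (intro continuous_intros wc) (smt (verit) atLeastAtMost_iff)
      have "\<gamma> L = \<gamma> 0" using per[rule_format, of 0] by simp
      then have h0: "h 0 = h L" by (simp add: h_def w_def)
      have hi: "inj_on h {0..<L}"
      proof (rule inj_onI)
        fix s s' assume s: "s \<in> {0..<L}" and s': "s' \<in> {0..<L}" and e: "h s = h s'"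
        have "w s = w s'"
          by (rule stereo_inj) (use s s' e wn wre in \<open>auto simp: h_def\<close>)
        then have "\<gamma> s = \<gamma> s'" using pm by (simp add: w_def)
        then show "s = s'" using inj s s' by (auto dest: inj_onD)
      qed
      show False by (rule no_loop[OF hc L h0 hi])
    qed
  qed
  show ?thesis using sub1 sub2 by blast
qed

end
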